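(* Let $d\ge1$, $n\ge2$, and let $G$ be the $d$-dimensional grid graph with all side lengths equal to $n$ (vertex set $\{[x_1,\dots,x_d]\in\mathbb{Z}^d:1\le x_j\le n\}$, vertices adjacent iff they differ in exactly one coordinate by exactly $1$), with normalized Laplacian $\mathfrak{L}=D^{-1/2}(D-S)D^{-1/2}$. For each integer $z$ with $0\le z\le n-1$, the number $$\lambda_{[z]}=2\left(\cos\left(\frac{\pi z}{2(n-1)}\right)\right)^2$$ is an eigenvalue of $\mathfrak{L}$, with corresponding eigenvector $\mathbf{v}_{[z]}$ having components $$(\mathbf{v}_{[z]})_{[x_1,\dots,x_d]}=\sqrt{\deg([x_1,\dots,x_d])}\prod_{j=1}^d(-1)^{x_j}\cos\left(\frac{\pi z}{n-1}(x_j-1)\right),$$ where $\deg([x_1,\dots,x_d])=d+\#\{j: x_j\ne1\text{ and }x_j\ne n\}$ is the degree of the vertex.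
   Context: $S$ is the adjacency matrix and $D$ the diagonal degree matrix of the grid graph. *)

theory Defs
  imports Complex_Main
begin

text \<open>Vertices of the d-dimensional grid with side length n: integer vectors
  [x_1,...,x_d] (represented as lists of length d, x_j = x ! (j-1)) with 1 <= x_j <= n.\<close>
definition grid_vertices :: "nat \<Rightarrow> nat \<Rightarrow> int list set" where
  "grid_vertices d n = {x. length x = d \<and> (\<forall>j<d. 1 \<le> x ! j \<and> x ! j \<le> int n)}"

definition grid_adj :: "int list \<Rightarrow> int list \<Rightarrow> bool" where
  "grid_adj x y \<longleftrightarrow> length x = length y \<and>
     (\<exists>j<length x. \<bar>x ! j - y ! j\<bar> = 1 \<and> (\<forall>i<length x. i \<noteq> j \<longrightarrow> x ! i = y ! i))"

definition grid_S :: "nat \<Rightarrow> nat \<Rightarrow> int list \<Rightarrow> int list \<Rightarrow> real" where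
  "grid_S d n x y = (if x \<in> grid_vertices d n \<and> y \<in> grid_vertices d n \<and> grid_adj x y then 1 else 0)"

definition grid_deg :: "nat \<Rightarrow> nat \<Rightarrow> int list \<Rightarrow> nat" where
  "grid_deg d n x = card {y \<in> grid_vertices d n. grid_adj x y}"

definition grid_D :: "nat \<Rightarrow> nat \<Rightarrow> int list \<Rightarrow> int list \<Rightarrow> real" where
  "grid_D d n x y = (if x = y then real (grid_deg d n x) else 0)"

definition grid_normLap :: "nat \<Rightarrow> nat \<Rightarrow> int list \<Rightarrow> int list \<Rightarrow> real" where
  "grid_normLap d n x y =
     (1 / sqrt (real (grid_deg d n x))) * (grid_D d n x y - grid_S d n x y) * (1 / sqrt (real (grid_deg d n y)))"

definition is_eigenvector_on :: "'a set \<Rightarrow> ('a \<Rightarrow> 'a \<Rightarrow> real) \<Rightarrow> real \<Rightarrow> ('a \<Rightarrow> real) \<Rightarrow> bool" where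
  "is_eigenvector_on V M lam v \<longleftrightarrow>
     (\<exists>x\<in>V. v x \<noteq> 0) \<and> (\<forall>x\<in>V. (\<Sum>y\<in>V. M x y * v y) = lam * v x)"

definition is_eigenvalue_on :: "'a set \<Rightarrow> ('a \<Rightarrow> 'a \<Rightarrow> real) \<Rightarrow> real \<Rightarrow> bool" where
  "is_eigenvalue_on V M lam \<longleftrightarrow> (\<exists>v. is_eigenvector_on V M lam v)"

end

theory Submission imports Defs begin

definition ff :: "real \<Rightarrow> int \<Rightarrow> real" where
  "ff th t = (-1) ^ nat t * cos (th * (real_of_int t - 1))"

definition Sn :: "nat \<Rightarrow> int \<Rightarrow> int set" where
  "Sn n t = {s \<in> {-1,1}. 1 \<le> t+s \<and> t+s \<le> int n}"

lemma sgn_succ: "0 \<le> t \<Longrightarrow> (-1::real) ^ nat (t+1) = - ((-1) ^ nat t)"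
  by (simp add: nat_add_distrib)

lemma sgn_pred: "1 \<le> t \<Longrightarrow> (-1::real) ^ nat (t-1) = - ((-1) ^ nat t)"
proof -
  assume "1 \<le> t"
  then have "nat t = Suc (nat (t-1))" by linarith
  then show ?thesis by simp
qed

lemma one_dim:
  assumes "1 \<le> t" "t \<le> int n" "n \<ge> 2" "sin (th*(real n - 1)) = 0"
  shows "(\<Sum>s\<in>Sn n t. ff th (t+s)) = - cos th * real (card (Sn n t)) * ff th t"
proof -
  consider "t = 1" | "t = int n" | "1 < t \<and> t < int n" using assms by linarith
  then show ?thesis
  proof cases
    case 1
    then have S: "Sn n t = {1}" using assms by (auto simp: Sn_def)
    have "nat 2 = 2" by simp
    show ?thesis unfolding S using 1 by (simp add: ff_def)
  next
    case 2
    then have S: "Sn n t = {-1}" using assms by (auto simp: Sn_def)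
    have a: "th * (real_of_int t - 2) = th*(real n - 1) - th" using 2 by (simp add: algebra_simps)
    have b: "th * (real_of_int t - 1) = th*(real n - 1)" using 2 by simp
    show ?thesis using assms(1,4)
      by (simp add: S ff_def a b cos_diff sgn_pred[simplified])
  next
    case 3
    then have S: "Sn n t = {-1,1}" using assms by (auto simp: Sn_def)
    define A where "A = th * (real_of_int t - 1)"
    have a: "th * (real_of_int (t + -1) - 1) = A - th" by (simp add: A_def algebra_simps)
    have b: "th * (real_of_int (t + 1) - 1) = A + th" by (simp add: A_def algebra_simps)
    have s1: "(-1::real) ^ nat (t + -1) = - ((-1) ^ nat t)" using sgn_pred[of t] 3 by simp
    have s2: "(-1::real) ^ nat (t + 1) = - ((-1) ^ nat t)" using sgn_succ[of t] 3 by simp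
    have f1: "ff th (t + -1) = - ((-1) ^ nat t) * cos (A - th)"
      unfolding ff_def a s1 by simp
    have f2: "ff th (t + 1) = - ((-1) ^ nat t) * cos (A + th)"
      unfolding ff_def b s2 by simp
    have f0: "ff th t = (-1) ^ nat t * cos A" unfolding ff_def A_def by simp
    have "(\<Sum>s\<in>Sn n t. ff th (t+s)) = ff th (t + -1) + ff th (t + 1)" unfolding S by simp
    also have "\<dots> = - cos th * 2 * ff th t"
      unfolding f1 f2 f0 by (simp add: cos_diff cos_add algebra_simps)
    finally show ?thesis unfolding S by simp
  qed
qed

definition PP :: "nat \<Rightarrow> nat \<Rightarrow> int list \<Rightarrow> (nat \<times> int) set" where
  "PP d n x = (SIGMA j:{..<d}. Sn n (x!j))"

definition mv :: "int list \<Rightarrow> nat \<times> int \<Rightarrow> int list" where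
  "mv x p = x[fst p := x ! fst p + snd p]"

lemma nbr_eq:
  assumes "x \<in> grid_vertices d n"
  shows "{y \<in> grid_vertices d n. grid_adj x y} = mv x ` PP d n x"
proof
  have lx: "length x = d" using assms by (simp add: grid_vertices_def)
  show "{y \<in> grid_vertices d n. grid_adj x y} \<subseteq> mv x ` PP d n x"
  proof
    fix y assume "y \<in> {y \<in> grid_vertices d n. grid_adj x y}"
    then have yV: "y \<in> grid_vertices d n" and adj: "grid_adj x y" by auto
    from adj lx obtain j where j: "j < d" "\<bar>x ! j - y ! j\<bar> = 1"
      "\<forall>i<d. i \<noteq> j \<longrightarrow> x ! i = y ! i" and ly: "length y = d"
      unfolding grid_adj_def by auto
    define s where "s = y ! j - x ! j"
    have s: "s \<in> {-1,1}" using j(2) unfolding s_def by auto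
    have yeq: "y = mv x (j, s)"
      by (rule nth_equalityI) (use lx ly j s_def in \<open>auto simp: mv_def nth_list_update\<close>)
    have "s \<in> Sn n (x!j)" using s yV j(1) unfolding Sn_def grid_vertices_def s_def by auto
    then have "(j,s) \<in> PP d n x" using j(1) by (simp add: PP_def)
    then show "y \<in> mv x ` PP d n x" using yeq by blast
  qed
next
  have lx: "length x = d" using assms by (simp add: grid_vertices_def)
  show "mv x ` PP d n x \<subseteq> {y \<in> grid_vertices d n. grid_adj x y}"
  proof
    fix y assume "y \<in> mv x ` PP d n x"
    then obtain j s where js: "j < d" "s \<in> Sn n (x!j)" and y: "y = mv x (j,s)"
      unfolding PP_def by auto
    have s: "s \<in> {-1,1}" "1 \<le> x!j + s" "x!j+s \<le> int n" using js(2) by (auto simp: Sn_def)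
    have "y \<in> grid_vertices d n"
      using assms js(1) s unfolding y mv_def grid_vertices_def by (auto simp: nth_list_update)
    moreover have "grid_adj x y"
      unfolding grid_adj_def y mv_def using lx js(1) s(1)
      by (intro conjI exI[of _ j]) (auto simp: nth_list_update)
    ultimately show "y \<in> {y \<in> grid_vertices d n. grid_adj x y}" by blast
  qed
qed

lemma mv_inj:
  assumes "length x = d"
  shows "inj_on (mv x) (PP d n x)"
proof
  fix p q assume p: "p \<in> PP d n x" and q: "q \<in> PP d n x" and e: "mv x p = mv x q"
  obtain j s where pj: "p = (j,s)" "j < d" "s \<in> {-1,1}" using p by (cases p) (auto simp: PP_def Sn_def)
  obtain k r where qk: "q = (k,r)" "k < d" "r \<in> {-1,1}" using q by (cases q) (auto simp: PP_def Sn_def)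
  have ej: "mv x p ! j = mv x q ! j" using e by simp
  have ek: "mv x p ! k = mv x q ! k" using e by simp
  show "p = q"
  proof (cases "j = k")
    case True
    then show ?thesis using ej pj qk assms by (auto simp: mv_def)
  next
    case False
    then show ?thesis using ej pj qk assms by (auto simp: mv_def nth_list_update)
  qed
qed

lemma finite_PP: "finite (PP d n x)"
  unfolding PP_def Sn_def by auto

lemma finite_V: "finite (grid_vertices d n)"
proof -
  have "grid_vertices d n \<subseteq> {xs. set xs \<subseteq> {1..int n} \<and> length xs = d}"
    unfolding grid_vertices_def by (auto simp: in_set_conv_nth)
  moreover have "finite {xs. set xs \<subseteq> {1..int n} \<and> length xs = d}"
    by (rule finite_lists_length_eq) simp
  ultimately show ?thesis by (rule finite_subset)
qed

lemma deg_eq: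
  assumes "x \<in> grid_vertices d n"
  shows "grid_deg d n x = card (PP d n x)"
  unfolding grid_deg_def nbr_eq[OF assms]
  by (rule card_image, rule mv_inj) (use assms in \<open>simp add: grid_vertices_def\<close>)

lemma nbr_sum:
  assumes "x \<in> grid_vertices d n"
  shows "(\<Sum>y\<in>{y \<in> grid_vertices d n. grid_adj x y}. h y) = (\<Sum>p\<in>PP d n x. h (mv x p))"
  unfolding nbr_eq[OF assms]
  by (rule sum.reindex[unfolded comp_def], rule mv_inj) (use assms in \<open>simp add: grid_vertices_def\<close>)

lemma deg_pos:
  assumes "x \<in> grid_vertices d n" "d \<ge> 1" "n \<ge> 2"
  shows "grid_deg d n x > 0"
proof -
  have b: "1 \<le> x!0" "x!0 \<le> int n" using assms unfolding grid_vertices_def by auto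
  have "(0, if x!0 = 1 then 1 else -1) \<in> PP d n x"
    using assms(2,3) b unfolding PP_def Sn_def by auto
  then have "PP d n x \<noteq> {}" by blast
  then show ?thesis using deg_eq[OF assms(1)] finite_PP by (simp add: card_gt_0_iff)
qed


definition ww :: "real \<Rightarrow> nat \<Rightarrow> int list \<Rightarrow> real" where
  "ww th d x = (\<Prod>j<d. ff th (x!j))"

lemma prod_upd:
  assumes "j < d" "length x = d"
  shows "ww th d (x[j:=t]) = ff th t * (\<Prod>i\<in>{..<d}-{j}. ff th (x!i))"
proof -
  have "ww th d (x[j:=t]) = ff th ((x[j:=t])!j) * (\<Prod>i\<in>{..<d}-{j}. ff th ((x[j:=t])!i))"
    unfolding ww_def using assms(1) by (simp add: prod.remove)
  also have "(\<Prod>i\<in>{..<d}-{j}. ff th ((x[j:=t])!i)) = (\<Prod>i\<in>{..<d}-{j}. ff th (x!i))"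
    by (rule prod.cong) auto
  finally show ?thesis using assms by simp
qed

lemma nbr_w_sum:
  assumes "x \<in> grid_vertices d n" "n \<ge> 2" "sin (th*(real n - 1)) = 0"
  shows "(\<Sum>p\<in>PP d n x. ww th d (mv x p)) = - cos th * real (card (PP d n x)) * ww th d x"
proof -
  have lx: "length x = d" using assms by (simp add: grid_vertices_def)
  define R where "R j = (\<Prod>i\<in>{..<d}-{j}. ff th (x!i))" for j
  have wx: "ww th d x = ff th (x!j) * R j" if "j < d" for j
    using prod_upd[OF that lx, of th "x!j"] by (simp add: R_def)
  have "(\<Sum>p\<in>PP d n x. ww th d (mv x p)) = (\<Sum>j<d. \<Sum>s\<in>Sn n (x!j). ww th d (mv x (j,s)))"
    unfolding PP_def by (subst sum.Sigma) (auto simp: Sn_def)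
  also have "\<dots> = (\<Sum>j<d. R j * (\<Sum>s\<in>Sn n (x!j). ff th (x!j + s)))"
    by (rule sum.cong) (auto simp: mv_def prod_upd lx R_def sum_distrib_left mult.commute)
  also have "\<dots> = (\<Sum>j<d. - cos th * ww th d x * real (card (Sn n (x!j))))"
  proof (rule sum.cong)
    fix j assume j: "j \<in> {..<d}"
    have b: "1 \<le> x!j" "x!j \<le> int n" using assms(1) j unfolding grid_vertices_def by auto
    show "R j * (\<Sum>s\<in>Sn n (x!j). ff th (x!j + s)) = - cos th * ww th d x * real (card (Sn n (x!j)))"
      using one_dim[OF b assms(2,3)] wx[of j] j by simp
  qed simp
  also have "\<dots> = - cos th * ww th d x * real (\<Sum>j<d. card (Sn n (x!j)))"
    by (simp add: sum_distrib_left)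
  also have "(\<Sum>j<d. card (Sn n (x!j))) = card (PP d n x)"
    unfolding PP_def by (subst card_SigmaI) (auto simp: Sn_def)
  finally show ?thesis by simp
qed

theorem mainTheorem9:
  fixes d n z :: nat
  assumes "d \<ge> 1" and "n \<ge> 2" and "z \<le> n - 1"
  shows "is_eigenvalue_on (grid_vertices d n) (grid_normLap d n)
           (2 * (cos (pi * real z / (2 * (real n - 1))))\<^sup>2)
       \<and> is_eigenvector_on (grid_vertices d n) (grid_normLap d n)
           (2 * (cos (pi * real z / (2 * (real n - 1))))\<^sup>2)
           (\<lambda>x. sqrt (real (grid_deg d n x)) *
                 (\<Prod>j<d. (-1::real) ^ nat (x ! j) *
                          cos (pi * real z / (real n - 1) * (real_of_int (x ! j) - 1))))"
proof -
  define th where "th = pi * real z / (real n - 1)"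
  define V where "V = grid_vertices d n"
  define v where "v x = sqrt (real (grid_deg d n x)) * ww th d x" for x
  have n1: "real n - 1 \<noteq> 0" using assms(2) by simp
  have sin0: "sin (th*(real n - 1)) = 0" unfolding th_def using n1 by (simp add: sin_npi mult.commute)
  have lam: "2 * (cos (pi * real z / (2 * (real n - 1))))\<^sup>2 = 1 + cos th"
  proof -
    have "pi * real z / (2 * (real n - 1)) = th / 2" unfolding th_def by simp
    moreover have "cos th = 2 * (cos (th/2))\<^sup>2 - 1" using cos_double[of "th/2"] by (simp add: cos_squared_eq)
    ultimately show ?thesis by (simp only:)
  qed
  have veq: "(\<lambda>x. sqrt (real (grid_deg d n x)) *
                 (\<Prod>j<d. (-1::real) ^ nat (x ! j) *
                          cos (pi * real z / (real n - 1) * (real_of_int (x ! j) - 1)))) = v"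
    unfolding v_def ww_def ff_def th_def by simp
  have ev: "is_eigenvector_on V (grid_normLap d n) (1 + cos th) v"
    unfolding is_eigenvector_on_def
  proof
    define x0 where "x0 = replicate d (1::int)"
    have x0V: "x0 \<in> V" unfolding V_def grid_vertices_def x0_def using assms(2) by auto
    have "ww th d x0 = (-1) ^ d" unfolding ww_def ff_def x0_def by simp
    then have "v x0 \<noteq> 0" unfolding v_def using deg_pos[OF x0V[unfolded V_def] assms(1,2)] by simp
    then show "\<exists>x\<in>V. v x \<noteq> 0" using x0V by blast
  next
    show "\<forall>x\<in>V. (\<Sum>y\<in>V. grid_normLap d n x y * v y) = (1 + cos th) * v x"
    proof
      fix x assume xV: "x \<in> V"
      define dx where "dx = real (grid_deg d n x)"
      have dxp: "dx > 0" unfolding dx_def using deg_pos[OF xV[unfolded V_def] assms(1,2)] by simp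
      have "(\<Sum>y\<in>V. grid_normLap d n x y * v y)
          = (\<Sum>y\<in>V. (1 / sqrt dx) * ((grid_D d n x y - grid_S d n x y) * ww th d y))"
      proof (rule sum.cong)
        fix y assume yV: "y \<in> V"
        have "grid_deg d n y > 0" using deg_pos[OF yV[unfolded V_def] assms(1,2)] .
        then show "grid_normLap d n x y * v y = (1 / sqrt dx) * ((grid_D d n x y - grid_S d n x y) * ww th d y)"
          unfolding grid_normLap_def v_def dx_def by simp
      qed simp
      also have "\<dots> = (1 / sqrt dx) * ((\<Sum>y\<in>V. grid_D d n x y * ww th d y) - (\<Sum>y\<in>V. grid_S d n x y * ww th d y))"
        by (simp only: sum_distrib_left[symmetric] sum_subtractf[symmetric] left_diff_distrib)
      also have "(\<Sum>y\<in>V. grid_D d n x y * ww th d y) = dx * ww th d x"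
      proof -
        have "(\<Sum>y\<in>V. grid_D d n x y * ww th d y) = (\<Sum>y\<in>V. if x = y then dx * ww th d x else 0)"
          by (rule sum.cong) (auto simp: grid_D_def dx_def)
        then show ?thesis using xV finite_V[of d n] V_def by simp
      qed
      also have "(\<Sum>y\<in>V. grid_S d n x y * ww th d y) = (\<Sum>y\<in>{y\<in>V. grid_adj x y}. ww th d y)"
      proof -
        have "(\<Sum>y\<in>V. grid_S d n x y * ww th d y) = (\<Sum>y\<in>V. if grid_adj x y then ww th d y else 0)"
          by (rule sum.cong) (use xV V_def in \<open>auto simp: grid_S_def\<close>)
        then show ?thesis using finite_V[of d n] V_def by (simp add: sum.inter_filter)
      qed
      also have "\<dots> = - cos th * dx * ww th d x"
        unfolding V_def nbr_sum[OF xV[unfolded V_def]] nbr_w_sum[OF xV[unfolded V_def] assms(2) sin0]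
          dx_def deg_eq[OF xV[unfolded V_def]] by simp
      also have "(1 / sqrt dx) * (dx * ww th d x - - cos th * dx * ww th d x) = (1 + cos th) * (sqrt dx * ww th d x)"
      proof -
        have "dx / sqrt dx = sqrt dx" using dxp by (metis real_div_sqrt less_imp_le)
        moreover have "(1 / sqrt dx) * (dx * ww th d x - - cos th * dx * ww th d x) = (dx / sqrt dx) * ((1 + cos th) * ww th d x)"
          by (simp add: algebra_simps)
        ultimately show ?thesis by simp
      qed
      finally show "(\<Sum>y\<in>V. grid_normLap d n x y * v y) = (1 + cos th) * v x"
        unfolding v_def dx_def by simp
    qed
  qed
  show ?thesis unfolding lam veq using ev unfolding V_def is_eigenvalue_on_def by blast
qed

end
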